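(* Under (A1)–(A4), for any $\hat\beta\in\mathbb R^d$, $$\|\nabla R(\hat\beta)-\nabla R(\beta^* )\|_\infty\lesssim M_n\|\hat\beta-\beta^*\|_1,\qquad\|\nabla^2R(\hat\beta)-\nabla^2R(\beta^* )\|_{\max}\lesssim M_n\|\hat\beta-\beta^*\|_1.$$
   Context: Setting. $(X,Y,Z)$ is a random vector with $X\in\mathbb R$, $Y\in\{-1,1\}$ and $Z\in\mathbb R^d$. We write $a\lesssim b$ for $a\le Cb$ with a constant $C$ not depending on $n$ (the quantities $d$ and $M_n$ may depend on $n$). For a matrix $M$, $\|M\|_{\max}=\max|M_{ij}|$. Densities. $f(x\mid y,z)$ is the conditional density of $X$ given $(Y,Z)$. Risk. Let $w:\{-1,1\}\to(0,\infty)$ and $L_{01}(u)=\frac12(1-\mathrm{sign}(u))$, where $\mathrm{sign}(u)=1$ for $u\ge0$ and $-1$ otherwise. Define $R(\beta)=E[w(Y)L_{01}(Y(X-\beta^TZ))]$, with unique minimizer $\beta^*$. Smoothness definition. $f$ is $\ell$th order smooth if the following holds for all $z,y$: $f(\cdot\mid y,z)$ is $\ell$ times continuously differentiable, $|f^{(i)}|\le C$ for $i\le\ell$, and $|f^{(\ell)}(x+\Delta\mid y,z)-f^{(\ell)}(x\mid y,z)|\le L|\Delta|^\zeta$. Here $C,L$ are constants and $0<\zeta\le1$. Assumptions. (A1) $f$ is $\ell$th order smooth, with integer $\ell\ge2$. (A2) The smoothing kernel $K$ is supported on $[-1,1]$ and satisfies: - $K$ is symmetric and bounded, $\int K=1$,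 $\int K^2<\infty$, $K'$ bounded, and $K(\pm1)=0$; - $K$ has order $\ell$. (A3) $c\le P(Y=1)\le1-c$, and $w$ is positive and bounded. (A4) $|Z_j|\le M_n$ for all $j$ (with $M_n^2\le C\sqrt{n\delta/\log d}$ for a bandwidth $\delta$), and $E[Z_j^4\mid Y=y]$ is bounded. *)

theory Defs
  imports "HOL-Probability.Probability"
begin

definition sign01 :: "real \<Rightarrow> real" where
  "sign01 u = (if u \<ge> 0 then 1 else -1)"

definition L01 :: "real \<Rightarrow> real" where
  "L01 u = (1 - sign01 u) / 2"

text \<open>The joint law of (X,Y,Z) is described by p = P(Y=1), the conditional law Q y of Z
  given Y = y (a probability measure on R^d, represented on PiM {..<d}), and the conditional
  density f x y z of X given (Y,Z) = (y,z).  Vectors in R^d are functions nat => real,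
  only coordinates j < d are used.\<close>

definition risk :: "nat \<Rightarrow> real \<Rightarrow> (real \<Rightarrow> real) \<Rightarrow> (real \<Rightarrow> (nat \<Rightarrow> real) measure)
    \<Rightarrow> (real \<Rightarrow> real \<Rightarrow> (nat \<Rightarrow> real) \<Rightarrow> real) \<Rightarrow> (nat \<Rightarrow> real) \<Rightarrow> real" where
  "risk d p w Q f \<beta> =
     (\<Sum>y\<in>{1, -1::real}. (if y = 1 then p else 1 - p) * w y *
        (\<integral>z. (\<integral>x. L01 (y * (x - (\<Sum>j<d. \<beta> j * z j))) * f x y z \<partial>lborel) \<partial>Q y))"

definition gradR :: "nat \<Rightarrow> real \<Rightarrow> (real \<Rightarrow> real) \<Rightarrow> (real \<Rightarrow> (nat \<Rightarrow> real) measure)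
    \<Rightarrow> (real \<Rightarrow> real \<Rightarrow> (nat \<Rightarrow> real) \<Rightarrow> real) \<Rightarrow> (nat \<Rightarrow> real) \<Rightarrow> nat \<Rightarrow> real" where
  "gradR d p w Q f \<beta> j = deriv (\<lambda>t. risk d p w Q f (\<beta>(j := \<beta> j + t))) 0"

definition hessR :: "nat \<Rightarrow> real \<Rightarrow> (real \<Rightarrow> real) \<Rightarrow> (real \<Rightarrow> (nat \<Rightarrow> real) measure)
    \<Rightarrow> (real \<Rightarrow> real \<Rightarrow> (nat \<Rightarrow> real) \<Rightarrow> real) \<Rightarrow> (nat \<Rightarrow> real) \<Rightarrow> nat \<Rightarrow> nat \<Rightarrow> real" where
  "hessR d p w Q f \<beta> j k = deriv (\<lambda>t. gradR d p w Q f (\<beta>(k := \<beta> k + t)) j) 0"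

definition smooth_order :: "nat \<Rightarrow> real \<Rightarrow> real \<Rightarrow> real \<Rightarrow> (real \<Rightarrow> real \<Rightarrow> (nat \<Rightarrow> real) \<Rightarrow> real) \<Rightarrow> bool" where
  "smooth_order l C L \<zeta> f \<longleftrightarrow>
     (\<forall>y\<in>{1, -1::real}. \<forall>z.
        (\<forall>i<l. \<forall>x. ((deriv ^^ i) (\<lambda>x. f x y z) has_real_derivative (deriv ^^ Suc i) (\<lambda>x. f x y z) x) (at x))
      \<and> continuous_on UNIV ((deriv ^^ l) (\<lambda>x. f x y z))
      \<and> (\<forall>i\<le>l. \<forall>x. \<bar>(deriv ^^ i) (\<lambda>x. f x y z) x\<bar> \<le> C)
      \<and> (\<forall>x \<Delta>. \<bar>(deriv ^^ l) (\<lambda>x. f x y z) (x + \<Delta>) - (deriv ^^ l) (\<lambda>x. f x y z) x\<bar> \<le> L * \<bar>\<Delta>\<bar> powr \<zeta>))"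

definition kernel_ok :: "nat \<Rightarrow> (real \<Rightarrow> real) \<Rightarrow> bool" where
  "kernel_ok l K \<longleftrightarrow>
     (\<forall>u. \<bar>u\<bar> > 1 \<longrightarrow> K u = 0)
   \<and> (\<forall>u. K (-u) = K u)
   \<and> (\<exists>b. \<forall>u. \<bar>K u\<bar> \<le> b)
   \<and> integrable lborel K \<and> (\<integral>u. K u \<partial>lborel) = 1
   \<and> integrable lborel (\<lambda>u. (K u)\<^sup>2)
   \<and> (\<exists>b. \<forall>u\<in>{-1<..<1}. (K has_real_derivative deriv K u) (at u) \<and> \<bar>deriv K u\<bar> \<le> b)
   \<and> K 1 = 0 \<and> K (-1) = 0
   \<and> (\<forall>i. 1 \<le> i \<and> i < l \<longrightarrow> integrable lborel (\<lambda>u. u ^ i * K u) \<and> (\<integral>u. u ^ i * K u \<partial>lborel) = 0)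
   \<and> integrable lborel (\<lambda>u. \<bar>u\<bar> ^ l * \<bar>K u\<bar>)"

definition cond_density :: "nat \<Rightarrow> (real \<Rightarrow> real \<Rightarrow> (nat \<Rightarrow> real) \<Rightarrow> real) \<Rightarrow> bool" where
  "cond_density d f \<longleftrightarrow>
     (\<forall>y\<in>{1, -1::real}.
        (\<lambda>(x, z). f x y z) \<in> borel_measurable (lborel \<Otimes>\<^sub>M PiM {..<d} (\<lambda>_. borel))
      \<and> (\<forall>z. (\<forall>x. f x y z \<ge> 0) \<and> integrable lborel (\<lambda>x. f x y z) \<and> (\<integral>x. f x y z \<partial>lborel) = 1))"

end

theory Submission
  imports Defs
begin


lemma lip_bound:
  fixes g g1 :: "real \<Rightarrow> real"
  assumes d: "\<And>x. (g has_real_derivative g1 x) (at x)" and b: "\<And>x. \<bar>g1 x\<bar> \<le> C"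
  shows "\<bar>g a - g b\<bar> \<le> C * \<bar>a - b\<bar>"
proof -
  have *: "\<bar>g v - g u\<bar> \<le> C * (v - u)" if uv: "u < v" for u v
  proof -
    obtain z where "g v - g u = (v - u) * g1 z" using MVT2[OF uv, of g g1] d by blast
    then have "\<bar>g v - g u\<bar> = (v - u) * \<bar>g1 z\<bar>" using that by (simp add: abs_mult)
    also have "\<dots> \<le> (v - u) * C" using b[of z] that by (intro mult_left_mono) auto
    finally show ?thesis by (simp add: mult.commute)
  qed
  consider "a < b" | "a = b" | "b < a" by linarith
  then show ?thesis
  proof cases
    case 1 then show ?thesis using *[OF 1] by (simp add: abs_minus_commute)
  next
    case 3 then show ?thesis using *[OF 3] by simp
  qed simp
qed

lemma taylor_bound:
  fixes g g1 :: "real \<Rightarrow> real"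
  assumes d: "\<And>x. (g has_real_derivative g1 x) (at x)"
    and l: "\<And>u v. \<bar>g1 u - g1 v\<bar> \<le> C * \<bar>u - v\<bar>"
  shows "\<bar>g (a + h) - g a - h * g1 a\<bar> \<le> C * h\<^sup>2"
proof -
  have C0: "C \<ge> 0" using l[of 1 0] by simp
  define \<phi> where "\<phi> t = g t - t * g1 a" for t
  have d\<phi>: "(\<phi> has_real_derivative (g1 x - g1 a)) (at x)" for x
    unfolding \<phi>_def by (auto intro!: derivative_eq_intros d)
  have "\<phi> (a + h) - \<phi> a = g (a + h) - g a - h * g1 a" unfolding \<phi>_def by (simp add: algebra_simps)
  moreover have "\<bar>\<phi> (a + h) - \<phi> a\<bar> \<le> C * h\<^sup>2"
  proof -
    consider "h > 0" | "h = 0" | "h < 0" by linarith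
    then show ?thesis
    proof cases
      case 1
      obtain z where z: "a < z" "z < a + h" "\<phi> (a + h) - \<phi> a = (a + h - a) * (g1 z - g1 a)"
        using MVT2[of a "a + h" \<phi>, OF _ d\<phi>] 1 by auto
      have "\<bar>g1 z - g1 a\<bar> \<le> C * h" using l[of z a] z C0 by (smt (verit) mult_left_mono)
      then show ?thesis using z 1 by (simp add: abs_mult power2_eq_square mult_left_mono mult.assoc mult.left_commute)
    next
      case 3
      obtain z where z: "a + h < z" "z < a" "\<phi> a - \<phi> (a + h) = (a - (a + h)) * (g1 z - g1 a)"
        using MVT2[of "a + h" a \<phi>, OF _ d\<phi>] 3 by auto
      have "\<bar>g1 z - g1 a\<bar> \<le> C * (- h)" using l[of z a] z C0 by (smt (verit) mult_left_mono)
      then have "(-h) * \<bar>g1 z - g1 a\<bar> \<le> (-h) * (C * (-h))" using 3 by (intro mult_left_mono) auto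
      then have "\<bar>\<phi> a - \<phi> (a + h)\<bar> \<le> (-h) * (C * (-h))" using z 3 by (simp add: abs_mult)
      then show ?thesis by (simp add: abs_minus_commute power2_eq_square mult.commute mult.left_commute)
    qed simp
  qed
  ultimately show ?thesis by simp
qed




lemma deriv_from_quad:
  fixes q :: "real \<Rightarrow> real"
  assumes b: "\<And>t. \<bar>q t - q 0 - t * D\<bar> \<le> K * t\<^sup>2"
  shows "(q has_real_derivative D) (at 0)"
proof -
  have "((\<lambda>h. (q (0 + h) - q 0) / h - D) \<longlongrightarrow> 0) (at 0)"
  proof (rule Lim_null_comparison)
    show "\<forall>\<^sub>F h in at 0. norm ((q (0 + h) - q 0) / h - D) \<le> K * \<bar>h\<bar>"
      unfolding eventually_at_filter
    proof (intro always_eventually allI impI)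
      fix h :: real assume "h \<noteq> 0"
      then have "(q (0 + h) - q 0) / h - D = (q h - q 0 - h * D) / h" by (simp add: field_simps)
      also have "norm \<dots> = \<bar>q h - q 0 - h * D\<bar> / \<bar>h\<bar>" by (simp add: abs_divide)
      also have "\<dots> \<le> K * h\<^sup>2 / \<bar>h\<bar>" using b[of h] by (simp add: divide_right_mono)
      also have "\<dots> = K * \<bar>h\<bar>"
      proof -
        have hh: "h\<^sup>2 = \<bar>h\<bar> * \<bar>h\<bar>" unfolding power2_eq_square by (rule abs_mult_self_eq[symmetric])
        have "\<bar>h\<bar> \<noteq> 0" using \<open>h \<noteq> 0\<close> by simp
        then show ?thesis unfolding hh by (simp del: abs_mult_self_eq)
      qed
      finally show "norm ((q (0 + h) - q 0) / h - D) \<le> K * \<bar>h\<bar>" .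
    qed
    have "((\<lambda>h. \<bar>h\<bar>) \<longlongrightarrow> 0) (at (0::real))"
      by (rule tendsto_rabs_zero[OF tendsto_ident_at])
    from tendsto_mult[OF tendsto_const[of K] this]
    show "((\<lambda>h. K * \<bar>h\<bar>) \<longlongrightarrow> 0) (at 0)" by simp
  qed
  then have "((\<lambda>h. (q (0 + h) - q 0) / h) \<longlongrightarrow> D) (at 0)"
    by (rule LIM_zero_cancel)
  then show ?thesis unfolding DERIV_def .
qed

lemma ind_int_bound:
  fixes g :: "real \<Rightarrow> real"
  assumes S: "S \<in> sets borel" "{a<..<b} \<subseteq> S" "S \<subseteq> {a..b}" and ab: "a \<le> b"
    and gi: "integrable lborel g" and l: "\<And>u v. \<bar>g u - g v\<bar> \<le> C * \<bar>u - v\<bar>"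
    and c: "c \<in> {a..b}"
  shows "\<bar>(\<integral>x. indicator S x * g x \<partial>lborel) - (b - a) * g c\<bar> \<le> C * (b - a)\<^sup>2"
proof -
  have C0: "C \<ge> 0" using l[of 1 0] by simp
  have S': "S \<in> sets lborel" using S(1) by simp
  have e1: "emeasure lborel S \<le> ennreal (b - a)"
    using emeasure_mono[OF S(3), of lborel] ab by simp
  have e2: "ennreal (b - a) \<le> emeasure lborel S"
    using emeasure_mono[OF S(2), of lborel] S' ab by simp
  have eS: "emeasure lborel S = ennreal (b - a)" using e1 e2 by (rule antisym)
  have mS: "measure lborel S = b - a" using eS ab by (simp add: measure_def)
  have iS: "integrable lborel (\<lambda>x. indicator S x * g x)"
    using integrable_real_mult_indicator[OF S' gi] by (simp add: mult.commute)
  have iS2: "integrable lborel (\<lambda>x. indicator S x * g c)"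
    using S' eS by (intro integrable_mult_left integrable_real_indicator) auto
  have I2: "(\<integral>x. indicator S x * g c \<partial>lborel) = (b - a) * g c"
  proof -
    have "(\<integral>x. indicator S x * g c \<partial>lborel) = measure lborel S * g c" by simp
    then show ?thesis by (simp only: mS)
  qed
  have I3: "(\<integral>x. indicator S x * (g x - g c) \<partial>lborel) = (\<integral>x. indicator S x * g x \<partial>lborel) - (b - a) * g c"
    unfolding right_diff_distrib Bochner_Integration.integral_diff[OF iS iS2] I2 ..
  have "(\<integral>x. indicator S x * g x \<partial>lborel) - (b - a) * g c
      = (\<integral>x. indicator S x * (g x - g c) \<partial>lborel)"
    using I3 by linarith
  also have "\<bar>\<dots>\<bar> \<le> (\<integral>x. indicator S x * (C * (b - a)) \<partial>lborel)"
  proof (rule integral_abs_bound_integral)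
    show "integrable lborel (\<lambda>x. indicator S x * (g x - g c))"
      using Bochner_Integration.integrable_diff[OF iS iS2] by (simp add: right_diff_distrib)
    show "integrable lborel (\<lambda>x. indicator S x * (C * (b - a)))"
      using S' eS by (intro integrable_mult_left integrable_real_indicator) auto
    show "\<bar>indicator S x * (g x - g c)\<bar> \<le> indicator S x * (C * (b - a))" if "x \<in> space lborel" for x
    proof (cases "x \<in> S")
      case True
      then have "x \<in> {a..b}" using S by auto
      then have "\<bar>x - c\<bar> \<le> b - a" using c by auto
      then have "C * \<bar>x - c\<bar> \<le> C * (b - a)" using C0 by (rule mult_left_mono)
      then show ?thesis using True l[of x c] by simp
    qed simp
  qed
  also have "\<dots> = measure lborel S * (C * (b - a))" by simp
  also have "\<dots> = C * (b - a)\<^sup>2" unfolding mS by (simp add: power2_eq_square)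
  finally show ?thesis .
qed



definition Phi :: "real \<Rightarrow> (real \<Rightarrow> real) \<Rightarrow> real \<Rightarrow> real" where
  "Phi y g a = (\<integral>x. L01 (y * (x - a)) * g x \<partial>lborel)"

lemma L01_pos: "L01 (1 * (x - a)) = indicator {..<a} x"
  unfolding L01_def sign01_def by (auto split: split_indicator)

lemma L01_neg: "L01 ((-1) * (x - a)) = indicator {a<..} x"
  unfolding L01_def sign01_def by (auto split: split_indicator)

lemma ind_diff_lt:
  fixes g :: "real \<Rightarrow> real"
  assumes gi: "integrable lborel g" and ab: "a \<le> b"
  shows "(\<integral>x. indicator {..<b} x * g x \<partial>lborel) - (\<integral>x. indicator {..<a} x * g x \<partial>lborel)
         = (\<integral>x. indicator {a..<b} x * g x \<partial>lborel)"
proof -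
  have i1: "integrable lborel (\<lambda>x. indicator {..<b} x * g x)"
    using integrable_real_mult_indicator[OF _ gi, of "{..<b}"] by (simp add: mult.commute)
  have i2: "integrable lborel (\<lambda>x. indicator {..<a} x * g x)"
    using integrable_real_mult_indicator[OF _ gi, of "{..<a}"] by (simp add: mult.commute)
  have "(\<integral>x. indicator {..<b} x * g x \<partial>lborel) - (\<integral>x. indicator {..<a} x * g x \<partial>lborel)
       = (\<integral>x. indicator {..<b} x * g x - indicator {..<a} x * g x \<partial>lborel)"
    using Bochner_Integration.integral_diff[OF i1 i2] by simp
  also have "\<dots> = (\<integral>x. indicator {a..<b} x * g x \<partial>lborel)"
    using ab by (intro Bochner_Integration.integral_cong) (auto split: split_indicator)
  finally show ?thesis .
qed

lemma ind_diff_gt: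
  fixes g :: "real \<Rightarrow> real"
  assumes gi: "integrable lborel g" and ab: "a \<le> b"
  shows "(\<integral>x. indicator {a<..} x * g x \<partial>lborel) - (\<integral>x. indicator {b<..} x * g x \<partial>lborel)
         = (\<integral>x. indicator {a<..b} x * g x \<partial>lborel)"
proof -
  have i1: "integrable lborel (\<lambda>x. indicator {a<..} x * g x)"
    using integrable_real_mult_indicator[OF _ gi, of "{a<..}"] by (simp add: mult.commute)
  have i2: "integrable lborel (\<lambda>x. indicator {b<..} x * g x)"
    using integrable_real_mult_indicator[OF _ gi, of "{b<..}"] by (simp add: mult.commute)
  have "(\<integral>x. indicator {a<..} x * g x \<partial>lborel) - (\<integral>x. indicator {b<..} x * g x \<partial>lborel)
       = (\<integral>x. indicator {a<..} x * g x - indicator {b<..} x * g x \<partial>lborel)"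
    using Bochner_Integration.integral_diff[OF i1 i2] by simp
  also have "\<dots> = (\<integral>x. indicator {a<..b} x * g x \<partial>lborel)"
    using ab by (intro Bochner_Integration.integral_cong) (auto split: split_indicator)
  finally show ?thesis .
qed

lemma phi_bound:
  fixes g :: "real \<Rightarrow> real"
  assumes y: "y \<in> {1, -1}" and gi: "integrable lborel g" and l: "\<And>u v. \<bar>g u - g v\<bar> \<le> C * \<bar>u - v\<bar>"
  shows "\<bar>Phi y g b - Phi y g a - y * (b - a) * g a\<bar> \<le> C * (b - a)\<^sup>2"
proof -
  have P1: "Phi 1 g a = (\<integral>x. indicator {..<a} x * g x \<partial>lborel)" for a
    unfolding Phi_def using L01_pos[of _ a] by simp
  have P2: "Phi (-1) g a = (\<integral>x. indicator {a<..} x * g x \<partial>lborel)" for a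
    unfolding Phi_def using L01_neg[of _ a] by simp
  consider "y = 1" | "y = -1" using y by auto
  then show ?thesis
  proof cases
    case y1: 1
    show ?thesis
    proof (cases "a \<le> b")
      case True
      have "\<bar>(\<integral>x. indicator {a..<b} x * g x \<partial>lborel) - (b - a) * g a\<bar> \<le> C * (b - a)\<^sup>2"
        using True by (intro ind_int_bound[OF _ _ _ True gi l]) auto
      then show ?thesis unfolding y1 P1 ind_diff_lt[OF gi True, symmetric] by simp
    next
      case False
      then have ba: "b \<le> a" by simp
      have "\<bar>(\<integral>x. indicator {b..<a} x * g x \<partial>lborel) - (a - b) * g a\<bar> \<le> C * (a - b)\<^sup>2"
        using ba by (intro ind_int_bound[OF _ _ _ ba gi l]) auto
      moreover have "(a - b)\<^sup>2 = (b - a)\<^sup>2" by (simp add: power2_commute)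
      moreover have "Phi 1 g b - Phi 1 g a - 1 * (b - a) * g a
          = - ((\<integral>x. indicator {b..<a} x * g x \<partial>lborel) - (a - b) * g a)"
        unfolding P1 ind_diff_lt[OF gi ba, symmetric] by (simp add: algebra_simps)
      ultimately show ?thesis unfolding y1 by (simp only: abs_minus_cancel)
    qed
  next
    case y2: 2
    show ?thesis
    proof (cases "a \<le> b")
      case True
      have "\<bar>(\<integral>x. indicator {a<..b} x * g x \<partial>lborel) - (b - a) * g a\<bar> \<le> C * (b - a)\<^sup>2"
        using True by (intro ind_int_bound[OF _ _ _ True gi l]) auto
      moreover have "Phi (-1) g b - Phi (-1) g a - (-1) * (b - a) * g a
          = - ((\<integral>x. indicator {a<..b} x * g x \<partial>lborel) - (b - a) * g a)"
        unfolding P2 ind_diff_gt[OF gi True, symmetric] by (simp add: algebra_simps)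
      ultimately show ?thesis unfolding y2 by (simp only: abs_minus_cancel)
    next
      case False
      then have ba: "b \<le> a" by simp
      have "\<bar>(\<integral>x. indicator {b<..a} x * g x \<partial>lborel) - (a - b) * g a\<bar> \<le> C * (a - b)\<^sup>2"
        using ba by (intro ind_int_bound[OF _ _ _ ba gi l]) auto
      moreover have "(a - b)\<^sup>2 = (b - a)\<^sup>2" by (simp add: power2_commute)
      moreover have "Phi (-1) g b - Phi (-1) g a - (-1) * (b - a) * g a
          = (\<integral>x. indicator {b<..a} x * g x \<partial>lborel) - (a - b) * g a"
        unfolding P2 ind_diff_gt[OF gi ba, symmetric] by (simp add: algebra_simps)
      ultimately show ?thesis unfolding y2 by simp
    qed
  qed
qed



abbreviation NN :: "nat \<Rightarrow> (nat \<Rightarrow> real) measure" where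
  "NN d \<equiv> PiM {..<d} (\<lambda>_. borel)"

definition dotp :: "nat \<Rightarrow> (nat \<Rightarrow> real) \<Rightarrow> (nat \<Rightarrow> real) \<Rightarrow> real" where
  "dotp d \<beta> z = (\<Sum>i<d. \<beta> i * z i)"

lemma dotp_meas[measurable]: "dotp d \<beta> \<in> borel_measurable (NN d)"
  unfolding dotp_def by measurable

lemma comp_meas_at:
  assumes fm: "(\<lambda>(x, z). F x z) \<in> borel_measurable (lborel \<Otimes>\<^sub>M NN d)"
    and h: "h \<in> borel_measurable (NN d)"
  shows "(\<lambda>z. F (h z) z) \<in> borel_measurable (NN d)"
proof -
  have "(\<lambda>z. (h z, z)) \<in> measurable (NN d) (lborel \<Otimes>\<^sub>M NN d)"
    using h by measurable
  from measurable_compose[OF this fm] show ?thesis by simp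
qed

lemma sign01_meas[measurable]: "sign01 \<in> borel_measurable borel"
  unfolding sign01_def by measurable

lemma L01_meas[measurable]: "L01 \<in> borel_measurable borel"
  unfolding L01_def by measurable

lemma Phi_meas:
  assumes fm: "(\<lambda>(x, z). F x z) \<in> borel_measurable (lborel \<Otimes>\<^sub>M NN d)"
    and h: "h \<in> borel_measurable (NN d)"
  shows "(\<lambda>z. Phi y (\<lambda>x. F x z) (h z)) \<in> borel_measurable (NN d)"
proof -
  have sw: "(\<lambda>(z, x). F x z) \<in> borel_measurable (NN d \<Otimes>\<^sub>M lborel)"
    using measurable_compose[OF measurable_pair_swap' fm] by (simp add: case_prod_beta')
  have "(\<lambda>(z, x). L01 (y * (x - h z)) * F x z) \<in> borel_measurable (NN d \<Otimes>\<^sub>M lborel)"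
    using sw h by measurable
  then show ?thesis unfolding Phi_def
    by (rule lborel.borel_measurable_lebesgue_integral[of "\<lambda>z x. L01 (y * (x - h z)) * F x z", simplified])
qed

lemma deriv_meas:
  assumes fm: "(\<lambda>(x, z). F x z) \<in> borel_measurable (lborel \<Otimes>\<^sub>M NN d)"
    and dF: "\<And>x z. ((\<lambda>x. F x z) has_real_derivative F' x z) (at x)"
  shows "(\<lambda>(x, z). F' x z) \<in> borel_measurable (lborel \<Otimes>\<^sub>M NN d)"
proof (rule borel_measurable_LIMSEQ_real)
  let ?u = "\<lambda>i (x, z). (F (x + 1 / real (Suc i)) z - F x z) / (1 / real (Suc i))"
  show "(\<lambda>i. ?u i xz) \<longlonglongrightarrow> (\<lambda>(x, z). F' x z) xz" for xz
  proof (cases xz)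
    case (Pair x z)
    have lim: "((\<lambda>h. (F (x + h) z - F x z) / h) \<longlongrightarrow> F' x z) (at 0)"
      using dF[where x=x and z=z] unfolding DERIV_def by simp
    have s: "filterlim (\<lambda>i. 1 / real (Suc i)) (at 0) sequentially"
      unfolding filterlim_at using LIMSEQ_inverse_real_of_nat by (auto simp: inverse_eq_divide)
    show ?thesis using filterlim_compose[OF lim s] Pair by simp
  qed
  show "?u i \<in> borel_measurable (lborel \<Otimes>\<^sub>M NN d)" for i
  proof -
    have "(\<lambda>(x, z). (x + 1 / real (Suc i), z)) \<in> measurable (lborel \<Otimes>\<^sub>M NN d) (lborel \<Otimes>\<^sub>M NN d)"
      by measurable
    from measurable_compose[OF this fm] have "(\<lambda>(x, z). F (x + 1 / real (Suc i)) z) \<in> borel_measurable (lborel \<Otimes>\<^sub>M NN d)"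
      by (simp add: case_prod_beta')
    then show ?thesis using fm by measurable
  qed
qed



lemma dotp_upd:
  assumes "j < d"
  shows "dotp d (\<beta>(j := \<beta> j + t)) z = dotp d \<beta> z + t * z j"
proof -
  have "dotp d (\<beta>(j := \<beta> j + t)) z = (\<Sum>i<d. \<beta> i * z i + (if i = j then t * z j else 0))"
    unfolding dotp_def by (intro sum.cong) (auto simp: algebra_simps)
  also have "\<dots> = dotp d \<beta> z + t * z j"
    using assms by (simp add: sum.distrib dotp_def)
  finally show ?thesis .
qed

lemma abs_int_AE:
  fixes f g :: "'a \<Rightarrow> real"
  assumes "integrable M g" "AE x in M. \<bar>f x\<bar> \<le> g x"
  shows "\<bar>\<integral>x. f x \<partial>M\<bar> \<le> (\<integral>x. g x \<partial>M)"
proof -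
  have "\<bar>\<integral>x. f x \<partial>M\<bar> \<le> (\<integral>x. \<bar>f x\<bar> \<partial>M)"
    using integral_norm_bound[of M f] by simp
  also have "\<dots> \<le> (\<integral>x. g x \<partial>M)"
    using assms(2) by (intro integral_mono_AE'[OF assms(1)]) (auto elim: eventually_mono)
  finally show ?thesis .
qed

lemma L01_range: "0 \<le> L01 u" "L01 u \<le> 1"
  unfolding L01_def sign01_def by auto

lemma Phi_bound1:
  assumes Fpos: "\<And>x. g x \<ge> 0" and gi: "integrable lborel g" and g1: "(\<integral>x. g x \<partial>lborel) = 1"
  shows "\<bar>Phi y g a\<bar> \<le> 1"
proof -
  have gm: "g \<in> borel_measurable lborel" using gi by (rule borel_measurable_integrable)
  have i: "integrable lborel (\<lambda>x. L01 (y * (x - a)) * g x)"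
  proof (rule Bochner_Integration.integrable_bound[OF gi])
    show "(\<lambda>x. L01 (y * (x - a)) * g x) \<in> borel_measurable lborel" using gm by measurable
    show "AE x in lborel. norm (L01 (y * (x - a)) * g x) \<le> norm (g x)"
      using L01_range Fpos by (auto simp: abs_mult intro!: mult_left_le_one_le)
  qed
  have "\<bar>Phi y g a\<bar> \<le> (\<integral>x. g x \<partial>lborel)" unfolding Phi_def
    using i gi by (rule integral_abs_bound_integral)
      (use L01_range Fpos in \<open>auto simp: abs_mult intro!: mult_left_le_one_le\<close>)
  then show ?thesis using g1 by simp
qed

lemma grad_deriv:
  assumes M: "prob_space M" "sets M = sets (NN d)"
    and fm: "(\<lambda>(x, z). F x z) \<in> borel_measurable (lborel \<Otimes>\<^sub>M NN d)"
    and Fpos: "\<And>x z. F x z \<ge> 0" and Fint: "\<And>z. integrable lborel (\<lambda>x. F x z)"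
    and F1: "\<And>z. (\<integral>x. F x z \<partial>lborel) = 1"
    and lip: "\<And>u v z. \<bar>F u z - F v z\<bar> \<le> C * \<bar>u - v\<bar>" and bnd: "\<And>x z. \<bar>F x z\<bar> \<le> C"
    and ae: "AE z in M. \<forall>j<d. \<bar>z j\<bar> \<le> Mn"
    and y: "y \<in> {1, -1}" and j: "j < d"
  shows "((\<lambda>t. \<integral>z. Phi y (\<lambda>x. F x z) (dotp d (\<beta>(j := \<beta> j + t)) z) \<partial>M)
          has_real_derivative (\<integral>z. y * z j * F (dotp d \<beta> z) z \<partial>M)) (at 0)"
proof -
  interpret prob_space M by (rule M(1))
  have mcong: "borel_measurable M = borel_measurable (NN d)" using measurable_cong_sets[OF M(2) refl] .
  have C0: "C \<ge> 0" using bnd[of 0 undefined] by simp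
  have ya: "\<bar>y\<bar> = 1" using y by auto
  define A where "A t z = Phi y (\<lambda>x. F x z) (dotp d \<beta> z + t * z j)" for t z
  define G where "G z = y * z j * F (dotp d \<beta> z) z" for z
  have zjm: "(\<lambda>z. z j) \<in> borel_measurable (NN d)" using j by (intro measurable_component_singleton) auto
  have Aint: "integrable M (A t)" for t
  proof (rule integrable_const_bound[where B=1])
    show "AE z in M. norm (A t z) \<le> 1" unfolding A_def using Phi_bound1[OF Fpos Fint F1] by simp
    have "(\<lambda>z. dotp d \<beta> z + t * z j) \<in> borel_measurable (NN d)" using zjm by measurable
    from Phi_meas[OF fm this] show "A t \<in> borel_measurable M" unfolding A_def mcong .
  qed
  have Gint: "integrable M G"
  proof (rule integrable_const_bound[where B="Mn * C"])
    show "AE z in M. norm (G z) \<le> Mn * C"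
      using ae
    proof eventually_elim
      case (elim z)
      then have "\<bar>z j\<bar> \<le> Mn" using j by auto
      then show ?case unfolding G_def using bnd[of _ z] C0 by (simp add: abs_mult ya mult_mono)
    qed
    have "(\<lambda>z. F (dotp d \<beta> z) z) \<in> borel_measurable (NN d)" by (rule comp_meas_at[OF fm]) simp
    then show "G \<in> borel_measurable M" unfolding G_def mcong using zjm by measurable
  qed
  have key: "\<bar>(\<integral>z. A t z \<partial>M) - (\<integral>z. A 0 z \<partial>M) - t * (\<integral>z. G z \<partial>M)\<bar> \<le> (C * Mn\<^sup>2) * t\<^sup>2" for t
  proof -
    have "(\<integral>z. A t z \<partial>M) - (\<integral>z. A 0 z \<partial>M) - t * (\<integral>z. G z \<partial>M)
        = (\<integral>z. A t z - A 0 z - t * G z \<partial>M)"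
      using Aint[of t] Aint[of 0] Gint by simp
    also have "\<bar>\<dots>\<bar> \<le> (\<integral>z. (C * Mn\<^sup>2) * t\<^sup>2 \<partial>M)"
    proof (rule abs_int_AE)
      show "integrable M (\<lambda>z. (C * Mn\<^sup>2) * t\<^sup>2)" by simp
      show "AE z in M. \<bar>A t z - A 0 z - t * G z\<bar> \<le> (C * Mn\<^sup>2) * t\<^sup>2"
        using ae
      proof eventually_elim
        case (elim z)
        then have zj: "\<bar>z j\<bar> \<le> Mn" using j by auto
        have "\<bar>A t z - A 0 z - t * G z\<bar> \<le> C * (t * z j)\<^sup>2"
          using phi_bound[OF y Fint lip, where b="dotp d \<beta> z + t * z j" and a="dotp d \<beta> z"]
          unfolding A_def G_def by (simp add: algebra_simps)
        also have "\<dots> = C * t\<^sup>2 * (z j)\<^sup>2" by (simp add: power_mult_distrib)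
        also have "\<dots> \<le> C * t\<^sup>2 * Mn\<^sup>2"
        proof -
          have "(z j)\<^sup>2 \<le> Mn\<^sup>2" using power_mono[OF zj abs_ge_zero, of 2] by simp
          then show ?thesis using C0 by (intro mult_left_mono) auto
        qed
        finally show ?case by (simp add: algebra_simps)
      qed
    qed
    finally show ?thesis using prob_space by simp
  qed
  have "((\<lambda>t. \<integral>z. A t z \<partial>M) has_real_derivative (\<integral>z. G z \<partial>M)) (at 0)"
    by (rule deriv_from_quad[where K="C * Mn\<^sup>2"]) (use key in simp)
  moreover have "(\<lambda>t. \<integral>z. Phi y (\<lambda>x. F x z) (dotp d (\<beta>(j := \<beta> j + t)) z) \<partial>M) = (\<lambda>t. \<integral>z. A t z \<partial>M)"
    unfolding A_def dotp_upd[OF j] ..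
  ultimately show ?thesis unfolding G_def by simp
qed



lemma hess_deriv:
  assumes M: "prob_space M" "sets M = sets (NN d)"
    and fm: "(\<lambda>(x, z). F x z) \<in> borel_measurable (lborel \<Otimes>\<^sub>M NN d)"
    and fm1: "(\<lambda>(x, z). F' x z) \<in> borel_measurable (lborel \<Otimes>\<^sub>M NN d)"
    and dF: "\<And>x z. ((\<lambda>x. F x z) has_real_derivative F' x z) (at x)"
    and lip1: "\<And>u v z. \<bar>F' u z - F' v z\<bar> \<le> C * \<bar>u - v\<bar>"
    and bnd: "\<And>x z. \<bar>F x z\<bar> \<le> C" and bnd1: "\<And>x z. \<bar>F' x z\<bar> \<le> C"
    and ae: "AE z in M. \<forall>j<d. \<bar>z j\<bar> \<le> Mn"
    and y: "y \<in> {1, -1}" and j: "j < d" and k: "k < d"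
  shows "((\<lambda>t. \<integral>z. y * z j * F (dotp d (\<beta>(k := \<beta> k + t)) z) z \<partial>M)
          has_real_derivative (\<integral>z. y * z j * z k * F' (dotp d \<beta> z) z \<partial>M)) (at 0)"
proof -
  interpret prob_space M by (rule M(1))
  have mcong: "borel_measurable M = borel_measurable (NN d)" using measurable_cong_sets[OF M(2) refl] .
  have C0: "C \<ge> 0" using bnd[of 0 undefined] by simp
  have ya: "\<bar>y\<bar> = 1" using y by auto
  define A where "A t z = y * z j * F (dotp d \<beta> z + t * z k) z" for t z
  define G where "G z = y * z j * z k * F' (dotp d \<beta> z) z" for z
  have zjm: "(\<lambda>z. z j) \<in> borel_measurable (NN d)" using j by (intro measurable_component_singleton) auto
  have zkm: "(\<lambda>z. z k) \<in> borel_measurable (NN d)" using k by (intro measurable_component_singleton) auto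
  have Aint: "integrable M (A t)" for t
  proof (rule integrable_const_bound[where B="Mn * C"])
    show "AE z in M. norm (A t z) \<le> Mn * C"
      using ae
    proof eventually_elim
      case (elim z)
      then have "\<bar>z j\<bar> \<le> Mn" using j by auto
      then show ?case unfolding A_def using bnd[of _ z] C0 by (simp add: abs_mult ya mult_mono)
    qed
    have "(\<lambda>z. dotp d \<beta> z + t * z k) \<in> borel_measurable (NN d)" using zkm by measurable
    from comp_meas_at[OF fm this] have "(\<lambda>z. F (dotp d \<beta> z + t * z k) z) \<in> borel_measurable (NN d)" .
    then show "A t \<in> borel_measurable M" unfolding A_def mcong using zjm by measurable
  qed
  have Gint: "integrable M G"
  proof (rule integrable_const_bound[where B="Mn * Mn * C"])
    show "AE z in M. norm (G z) \<le> Mn * Mn * C"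
      using ae
    proof eventually_elim
      case (elim z)
      then have "\<bar>z j\<bar> \<le> Mn" "\<bar>z k\<bar> \<le> Mn" using j k by auto
      then show ?case unfolding G_def using bnd1[of _ z] C0 by (simp add: abs_mult ya mult_mono)
    qed
    have "(\<lambda>z. F' (dotp d \<beta> z) z) \<in> borel_measurable (NN d)" by (rule comp_meas_at[OF fm1]) simp
    then show "G \<in> borel_measurable M" unfolding G_def mcong using zjm zkm by measurable
  qed
  have key: "\<bar>(\<integral>z. A t z \<partial>M) - (\<integral>z. A 0 z \<partial>M) - t * (\<integral>z. G z \<partial>M)\<bar> \<le> (Mn * C * Mn\<^sup>2) * t\<^sup>2" for t
  proof -
    have "(\<integral>z. A t z \<partial>M) - (\<integral>z. A 0 z \<partial>M) - t * (\<integral>z. G z \<partial>M)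
        = (\<integral>z. A t z - A 0 z - t * G z \<partial>M)"
      using Aint[of t] Aint[of 0] Gint by simp
    also have "\<bar>\<dots>\<bar> \<le> (\<integral>z. (Mn * C * Mn\<^sup>2) * t\<^sup>2 \<partial>M)"
    proof (rule abs_int_AE)
      show "integrable M (\<lambda>z. (Mn * C * Mn\<^sup>2) * t\<^sup>2)" by simp
      show "AE z in M. \<bar>A t z - A 0 z - t * G z\<bar> \<le> (Mn * C * Mn\<^sup>2) * t\<^sup>2"
        using ae
      proof eventually_elim
        case (elim z)
        then have zj: "\<bar>z j\<bar> \<le> Mn" and zk: "\<bar>z k\<bar> \<le> Mn" using j k by auto
        have tb: "\<bar>F (dotp d \<beta> z + t * z k) z - F (dotp d \<beta> z) z - (t * z k) * F' (dotp d \<beta> z) z\<bar> \<le> C * (t * z k)\<^sup>2"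
          by (rule taylor_bound[OF dF lip1])
        have "A t z - A 0 z - t * G z = y * z j * (F (dotp d \<beta> z + t * z k) z - F (dotp d \<beta> z) z - (t * z k) * F' (dotp d \<beta> z) z)"
          unfolding A_def G_def by (simp add: algebra_simps)
        then have "\<bar>A t z - A 0 z - t * G z\<bar> = \<bar>z j\<bar> * \<bar>F (dotp d \<beta> z + t * z k) z - F (dotp d \<beta> z) z - (t * z k) * F' (dotp d \<beta> z) z\<bar>"
          by (simp add: abs_mult ya)
        also have "\<dots> \<le> Mn * (C * (t * z k)\<^sup>2)"
          using zj tb by (intro mult_mono) auto
        also have "\<dots> = Mn * C * t\<^sup>2 * (z k)\<^sup>2" by (simp add: power_mult_distrib)
        also have "\<dots> \<le> Mn * C * t\<^sup>2 * Mn\<^sup>2"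
        proof -
          have "(z k)\<^sup>2 \<le> Mn\<^sup>2" using power_mono[OF zk abs_ge_zero, of 2] by simp
          moreover have "Mn \<ge> 0" using zj by linarith
          ultimately show ?thesis using C0 by (intro mult_left_mono) auto
        qed
        finally show ?case by (simp add: algebra_simps)
      qed
    qed
    finally show ?thesis using prob_space by simp
  qed
  have "((\<lambda>t. \<integral>z. A t z \<partial>M) has_real_derivative (\<integral>z. G z \<partial>M)) (at 0)"
    by (rule deriv_from_quad[where K="Mn * C * Mn\<^sup>2"]) (use key in simp)
  moreover have "(\<lambda>t. \<integral>z. y * z j * F (dotp d (\<beta>(k := \<beta> k + t)) z) z \<partial>M) = (\<lambda>t. \<integral>z. A t z \<partial>M)"
    unfolding A_def dotp_upd[OF k] ..
  ultimately show ?thesis unfolding G_def by simp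
qed



lemma ab_le4: "\<bar>(a::real) * b\<bar> \<le> (a ^ 4 + b ^ 4 + 2) / 4"
proof -
  have 1: "\<bar>a * b\<bar> \<le> (a\<^sup>2 + b\<^sup>2) / 2"
    using sum_squares_bound[of "\<bar>a\<bar>" "\<bar>b\<bar>"] by (simp add: abs_mult power2_eq_square)
  have 2: "a\<^sup>2 \<le> (a ^ 4 + 1) / 2" "b\<^sup>2 \<le> (b ^ 4 + 1) / 2"
    using sum_squares_bound[of "a\<^sup>2" 1] sum_squares_bound[of "b\<^sup>2" 1]
    by (simp_all add: power2_eq_square power4_eq_xxxx)
  have g: "\<And>u p q r s::real. u \<le> (p + q) / 2 \<Longrightarrow> p \<le> (r + 1) / 2 \<Longrightarrow> q \<le> (s + 1) / 2 \<Longrightarrow> u \<le> (r + s + 2) / 4"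
    by argo
  from g[OF 1 2] show ?thesis .
qed

lemma ab_le4': "\<bar>(a::real) * b\<bar> * 4 \<le> a ^ 4 + b ^ 4 + 2"
  using ab_le4[of a b] by simp

lemma zz_int:
  assumes M: "prob_space M" "sets M = sets (NN d)"
    and ae: "AE z in M. \<forall>j<d. \<bar>z j\<bar> \<le> Mn"
    and B: "\<forall>j<d. (\<integral>z. (z j) ^ 4 \<partial>M) \<le> B"
    and j: "j < d" and i: "i < d"
  shows "integrable M (\<lambda>z. \<bar>z j * z i\<bar>)" "(\<integral>z. \<bar>z j * z i\<bar> \<partial>M) \<le> (B + 1) / 2"
    "(\<integral>z. \<bar>z j * z i\<bar> \<partial>M) \<le> Mn\<^sup>2"
proof -
  interpret prob_space M by (rule M(1))
  have mcong: "borel_measurable M = borel_measurable (NN d)" using measurable_cong_sets[OF M(2) refl] .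
  have zm: "(\<lambda>z. z l) \<in> borel_measurable M" if "l < d" for l
    unfolding mcong using that by (intro measurable_component_singleton) auto
  have i4: "integrable M (\<lambda>z. (z l) ^ 4)" if l: "l < d" for l
  proof (rule integrable_const_bound[where B="Mn ^ 4"])
    show "AE z in M. norm ((z l) ^ 4) \<le> Mn ^ 4"
      using ae
    proof eventually_elim
      case (elim z)
      then have zl: "\<bar>z l\<bar> \<le> Mn" using l by auto
      show ?case using power_mono[OF zl abs_ge_zero, of 4] by (simp add: power_abs)
    qed
    show "(\<lambda>z. (z l) ^ 4) \<in> borel_measurable M" using zm[OF l] by measurable
  qed
  have bnd2: "AE z in M. \<bar>z j * z i\<bar> \<le> Mn\<^sup>2"
    using ae
  proof eventually_elim
    case (elim z)
    then have "\<bar>z j\<bar> \<le> Mn" "\<bar>z i\<bar> \<le> Mn" using i j by auto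
    then show ?case by (simp add: abs_mult power2_eq_square mult_mono)
  qed
  show int: "integrable M (\<lambda>z. \<bar>z j * z i\<bar>)"
    using bnd2 by (intro integrable_const_bound[where B="Mn\<^sup>2"]) (use zm[OF j] zm[OF i] in auto)
  have "(\<integral>z. \<bar>z j * z i\<bar> \<partial>M) \<le> (\<integral>z. ((z j) ^ 4 + (z i) ^ 4 + 2) / 4 \<partial>M)"
    using int i4[OF j] i4[OF i] by (intro integral_mono) (auto simp: ab_le4')
  also have "\<dots> = ((\<integral>z. (z j) ^ 4 \<partial>M) + (\<integral>z. (z i) ^ 4 \<partial>M) + 2) / 4"
    using i4[OF j] i4[OF i] prob_space by simp
  also have "\<dots> \<le> (B + 1) / 2"
  proof -
    have "(\<integral>z. (z j) ^ 4 \<partial>M) \<le> B" "(\<integral>z. (z i) ^ 4 \<partial>M) \<le> B" using B i j by auto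
    then show ?thesis by argo
  qed
  finally show "(\<integral>z. \<bar>z j * z i\<bar> \<partial>M) \<le> (B + 1) / 2" .
  have "(\<integral>z. \<bar>z j * z i\<bar> \<partial>M) \<le> (\<integral>z. Mn\<^sup>2 \<partial>M)"
    using bnd2 by (intro abs_int_AE[where f="\<lambda>z. \<bar>z j * z i\<bar>", simplified]) auto
  then show "(\<integral>z. \<bar>z j * z i\<bar> \<partial>M) \<le> Mn\<^sup>2" using prob_space by simp
qed



lemma dot_diff: "\<bar>dotp d a z - dotp d b z\<bar> \<le> (\<Sum>i<d. \<bar>a i - b i\<bar> * \<bar>z i\<bar>)"
proof -
  have "dotp d a z - dotp d b z = (\<Sum>i<d. (a i - b i) * z i)"
    unfolding dotp_def by (simp add: sum_subtractf algebra_simps)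
  also have "\<bar>\<dots>\<bar> \<le> (\<Sum>i<d. \<bar>(a i - b i) * z i\<bar>)" by (rule sum_abs)
  finally show ?thesis by (simp add: abs_mult)
qed

lemma zz_bound:
  assumes M: "prob_space M" "sets M = sets (NN d)"
    and ae: "AE z in M. \<forall>j<d. \<bar>z j\<bar> \<le> Mn"
    and B: "\<forall>j<d. (\<integral>z. (z j) ^ 4 \<partial>M) \<le> B"
    and j: "j < d" and i: "i < d" and Mn: "Mn \<ge> 0"
  shows "(\<integral>z. \<bar>z j * z i\<bar> \<partial>M) \<le> Mn * max 1 ((B + 1) / 2)"
proof (cases "Mn \<le> 1")
  case True
  have "(\<integral>z. \<bar>z j * z i\<bar> \<partial>M) \<le> Mn\<^sup>2" by (rule zz_int(3)[OF M ae B j i])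
  also have "\<dots> \<le> Mn * 1" using True Mn by (simp add: power2_eq_square mult_left_le_one_le)
  also have "\<dots> \<le> Mn * max 1 ((B + 1) / 2)" using Mn by (intro mult_left_mono) auto
  finally show ?thesis .
next
  case False
  have "(\<integral>z. \<bar>z j * z i\<bar> \<partial>M) \<le> (B + 1) / 2" by (rule zz_int(2)[OF M ae B j i])
  also have "\<dots> \<le> max 1 ((B + 1) / 2)" by simp
  also have "\<dots> \<le> Mn * max 1 ((B + 1) / 2)" using False
    by (simp add: mult_le_cancel_right1)
  finally show ?thesis .
qed

lemma bounded_int:
  fixes g :: "(nat \<Rightarrow> real) \<Rightarrow> real"
  assumes M: "prob_space M" "sets M = sets (NN d)"
    and g: "g \<in> borel_measurable (NN d)" and b: "AE z in M. \<bar>g z\<bar> \<le> K"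
  shows "integrable M g"
proof -
  interpret prob_space M by (rule M(1))
  have mcong: "borel_measurable M = borel_measurable (NN d)" using measurable_cong_sets[OF M(2) refl] .
  show ?thesis using b g unfolding mcong[symmetric] by (intro integrable_const_bound[where B=K]) auto
qed

lemma grad_diff:
  assumes M: "prob_space M" "sets M = sets (NN d)"
    and fm: "(\<lambda>(x, z). F x z) \<in> borel_measurable (lborel \<Otimes>\<^sub>M NN d)"
    and lip: "\<And>u v z. \<bar>F u z - F v z\<bar> \<le> C * \<bar>u - v\<bar>" and bnd: "\<And>x z. \<bar>F x z\<bar> \<le> C"
    and ae: "AE z in M. \<forall>j<d. \<bar>z j\<bar> \<le> Mn"
    and B: "\<forall>j<d. (\<integral>z. (z j) ^ 4 \<partial>M) \<le> B"
    and y: "y \<in> {1, -1}" and j: "j < d" and Mn: "Mn \<ge> 0"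
  shows "\<bar>(\<integral>z. y * z j * F (dotp d bh z) z \<partial>M) - (\<integral>z. y * z j * F (dotp d bs z) z \<partial>M)\<bar>
         \<le> C * (\<Sum>i<d. \<bar>bh i - bs i\<bar>) * (Mn * max 1 ((B + 1) / 2))"
proof -
  interpret prob_space M by (rule M(1))
  have C0: "C \<ge> 0" using bnd[of 0 undefined] by simp
  have ya: "\<bar>y\<bar> = 1" using y by auto
  have zjm: "(\<lambda>z. z j) \<in> borel_measurable (NN d)" using j by (intro measurable_component_singleton) auto
  have Gi: "integrable M (\<lambda>z. y * z j * F (dotp d b z) z)" for b
  proof (rule bounded_int[OF M, where K="Mn * C"])
    have "(\<lambda>z. F (dotp d b z) z) \<in> borel_measurable (NN d)" by (rule comp_meas_at[OF fm]) simp
    then show "(\<lambda>z. y * z j * F (dotp d b z) z) \<in> borel_measurable (NN d)" using zjm by measurable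
    show "AE z in M. \<bar>y * z j * F (dotp d b z) z\<bar> \<le> Mn * C"
      using ae
    proof eventually_elim
      case (elim z)
      then have "\<bar>z j\<bar> \<le> Mn" using j by auto
      then show ?case using bnd[of _ z] C0 by (simp add: abs_mult ya mult_mono)
    qed
  qed
  define U where "U z = (\<Sum>i<d. C * \<bar>bh i - bs i\<bar> * \<bar>z j * z i\<bar>)" for z
  have Ui: "integrable M U" unfolding U_def
    using zz_int(1)[OF M ae B j] by (intro Bochner_Integration.integrable_sum) auto
  have "(\<integral>z. y * z j * F (dotp d bh z) z \<partial>M) - (\<integral>z. y * z j * F (dotp d bs z) z \<partial>M)
      = (\<integral>z. y * z j * F (dotp d bh z) z - y * z j * F (dotp d bs z) z \<partial>M)"
    using Gi[of bh] Gi[of bs] by simp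
  also have "\<bar>\<dots>\<bar> \<le> (\<integral>z. U z \<partial>M)"
  proof (rule abs_int_AE[OF Ui], rule AE_I2)
    fix z
    have "\<bar>y * z j * F (dotp d bh z) z - y * z j * F (dotp d bs z) z\<bar>
        = \<bar>z j\<bar> * \<bar>F (dotp d bh z) z - F (dotp d bs z) z\<bar>"
      by (simp add: abs_mult ya right_diff_distrib[symmetric] mult.assoc)
    also have "\<dots> \<le> \<bar>z j\<bar> * (C * (\<Sum>i<d. \<bar>bh i - bs i\<bar> * \<bar>z i\<bar>))"
    proof (intro mult_left_mono)
      show "\<bar>F (dotp d bh z) z - F (dotp d bs z) z\<bar> \<le> C * (\<Sum>i<d. \<bar>bh i - bs i\<bar> * \<bar>z i\<bar>)"
        using lip[of "dotp d bh z" z "dotp d bs z"] mult_left_mono[OF dot_diff C0] by (rule order_trans)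
    qed simp
    also have "\<dots> = U z" unfolding U_def by (simp add: sum_distrib_left abs_mult algebra_simps)
    finally show "\<bar>y * z j * F (dotp d bh z) z - y * z j * F (dotp d bs z) z\<bar> \<le> U z" .
  qed
  also have "(\<integral>z. U z \<partial>M) = (\<Sum>i<d. C * \<bar>bh i - bs i\<bar> * (\<integral>z. \<bar>z j * z i\<bar> \<partial>M))"
    unfolding U_def using zz_int(1)[OF M ae B j]
    by (subst Bochner_Integration.integral_sum) auto
  also have "\<dots> \<le> (\<Sum>i<d. C * \<bar>bh i - bs i\<bar> * (Mn * max 1 ((B + 1) / 2)))"
    using zz_bound[OF M ae B j _ Mn] C0 by (intro sum_mono mult_left_mono) auto
  also have "\<dots> = C * (\<Sum>i<d. \<bar>bh i - bs i\<bar>) * (Mn * max 1 ((B + 1) / 2))"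
    by (simp add: sum_distrib_left sum_distrib_right algebra_simps)
  finally show ?thesis .
qed

lemma hess_diff:
  assumes M: "prob_space M" "sets M = sets (NN d)"
    and fm1: "(\<lambda>(x, z). F' x z) \<in> borel_measurable (lborel \<Otimes>\<^sub>M NN d)"
    and lip1: "\<And>u v z. \<bar>F' u z - F' v z\<bar> \<le> C * \<bar>u - v\<bar>" and bnd1: "\<And>x z. \<bar>F' x z\<bar> \<le> C"
    and ae: "AE z in M. \<forall>j<d. \<bar>z j\<bar> \<le> Mn"
    and B: "\<forall>j<d. (\<integral>z. (z j) ^ 4 \<partial>M) \<le> B"
    and y: "y \<in> {1, -1}" and j: "j < d" and k: "k < d" and Mn: "Mn \<ge> 0"
  shows "\<bar>(\<integral>z. y * z j * z k * F' (dotp d bh z) z \<partial>M) - (\<integral>z. y * z j * z k * F' (dotp d bs z) z \<partial>M)\<bar>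
         \<le> C * (\<Sum>i<d. \<bar>bh i - bs i\<bar>) * (Mn * max 1 ((B + 1) / 2))"
proof -
  interpret prob_space M by (rule M(1))
  have C0: "C \<ge> 0" using bnd1[of 0 undefined] by simp
  have ya: "\<bar>y\<bar> = 1" using y by auto
  have zjm: "(\<lambda>z. z j) \<in> borel_measurable (NN d)" using j by (intro measurable_component_singleton) auto
  have zkm: "(\<lambda>z. z k) \<in> borel_measurable (NN d)" using k by (intro measurable_component_singleton) auto
  have Gi: "integrable M (\<lambda>z. y * z j * z k * F' (dotp d b z) z)" for b
  proof (rule bounded_int[OF M, where K="Mn * Mn * C"])
    have "(\<lambda>z. F' (dotp d b z) z) \<in> borel_measurable (NN d)" by (rule comp_meas_at[OF fm1]) simp
    then show "(\<lambda>z. y * z j * z k * F' (dotp d b z) z) \<in> borel_measurable (NN d)" using zjm zkm by measurable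
    show "AE z in M. \<bar>y * z j * z k * F' (dotp d b z) z\<bar> \<le> Mn * Mn * C"
      using ae
    proof eventually_elim
      case (elim z)
      then have "\<bar>z j\<bar> \<le> Mn" "\<bar>z k\<bar> \<le> Mn" using j k by auto
      then show ?case using bnd1[of _ z] C0 by (simp add: abs_mult ya mult_mono)
    qed
  qed
  define S where "S = (\<Sum>i<d. \<bar>bh i - bs i\<bar>)"
  have S0: "S \<ge> 0" unfolding S_def by (simp add: sum_nonneg)
  define U where "U z = (C * Mn * S) * \<bar>z j * z k\<bar>" for z
  have Ui: "integrable M U" unfolding U_def
    using zz_int(1)[OF M ae B j k] by simp
  have "(\<integral>z. y * z j * z k * F' (dotp d bh z) z \<partial>M) - (\<integral>z. y * z j * z k * F' (dotp d bs z) z \<partial>M)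
      = (\<integral>z. y * z j * z k * F' (dotp d bh z) z - y * z j * z k * F' (dotp d bs z) z \<partial>M)"
    using Gi[of bh] Gi[of bs] by simp
  also have "\<bar>\<dots>\<bar> \<le> (\<integral>z. U z \<partial>M)"
  proof (rule abs_int_AE[OF Ui])
    show "AE z in M. \<bar>y * z j * z k * F' (dotp d bh z) z - y * z j * z k * F' (dotp d bs z) z\<bar> \<le> U z"
      using ae
    proof eventually_elim
      case (elim z)
      have "\<bar>y * z j * z k * F' (dotp d bh z) z - y * z j * z k * F' (dotp d bs z) z\<bar>
          = \<bar>z j * z k\<bar> * \<bar>F' (dotp d bh z) z - F' (dotp d bs z) z\<bar>"
        by (simp add: abs_mult ya right_diff_distrib[symmetric] mult.assoc)
      also have "\<dots> \<le> \<bar>z j * z k\<bar> * (C * (Mn * S))"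
      proof (intro mult_left_mono)
        have "(\<Sum>i<d. \<bar>bh i - bs i\<bar> * \<bar>z i\<bar>) \<le> (\<Sum>i<d. \<bar>bh i - bs i\<bar> * Mn)"
          using elim by (intro sum_mono mult_left_mono) auto
        also have "\<dots> = Mn * S" unfolding S_def by (simp add: sum_distrib_left mult.commute)
        finally have "\<bar>dotp d bh z - dotp d bs z\<bar> \<le> Mn * S" using dot_diff order_trans by blast
        then show "\<bar>F' (dotp d bh z) z - F' (dotp d bs z) z\<bar> \<le> C * (Mn * S)"
          using lip1[of "dotp d bh z" z "dotp d bs z"] mult_left_mono[OF _ C0] order_trans by blast
      qed simp
      also have "\<dots> = U z" unfolding U_def by (simp add: algebra_simps)
      finally show ?case .
    qed
  qed
  also have "(\<integral>z. U z \<partial>M) = (C * Mn * S) * (\<integral>z. \<bar>z j * z k\<bar> \<partial>M)"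
    unfolding U_def by simp
  also have "\<dots> \<le> (C * Mn * S) * ((B + 1) / 2)"
    using zz_int(2)[OF M ae B j k] C0 Mn S0 by (intro mult_left_mono) auto
  also have "\<dots> \<le> (C * Mn * S) * max 1 ((B + 1) / 2)"
    using C0 Mn S0 by (intro mult_left_mono) auto
  also have "\<dots> = C * (\<Sum>i<d. \<bar>bh i - bs i\<bar>) * (Mn * max 1 ((B + 1) / 2))"
    unfolding S_def by (simp add: algebra_simps)
  finally show ?thesis .
qed



lemma comb:
  fixes p w1 w2 W X1 X2 T :: real
  assumes p: "0 \<le> p" "p \<le> 1" and w: "0 \<le> w1" "w1 \<le> W" "0 \<le> w2" "w2 \<le> W"
    and X: "\<bar>X1\<bar> \<le> T" "\<bar>X2\<bar> \<le> T"
  shows "\<bar>p * w1 * X1 + (1 - p) * w2 * X2\<bar> \<le> 2 * W * T"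
proof -
  have T0: "T \<ge> 0" using X(1) by linarith
  have W0: "W \<ge> 0" using w by linarith
  have "\<bar>p * w1 * X1 + (1 - p) * w2 * X2\<bar> \<le> \<bar>p * w1 * X1\<bar> + \<bar>(1 - p) * w2 * X2\<bar>"
    by (rule abs_triangle_ineq)
  also have "\<dots> = (p * w1) * \<bar>X1\<bar> + ((1 - p) * w2) * \<bar>X2\<bar>"
    using p w by (simp add: abs_mult)
  also have "\<dots> \<le> (p * W) * T + ((1 - p) * W) * T"
    using p w X by (intro add_mono mult_mono) auto
  also have "\<dots> = W * T" by (simp add: algebra_simps)
  also have "\<dots> \<le> 2 * W * T" using T0 W0 by simp
  finally show ?thesis .
qed

lemma main:
  fixes f :: "real \<Rightarrow> real \<Rightarrow> (nat \<Rightarrow> real) \<Rightarrow> real"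
  assumes l2: "l \<ge> 2" and c0: "0 < c"
    and HQ: "\<forall>y\<in>{1, -1::real}. prob_space (Q y) \<and> sets (Q y) = sets (PiM {..<d} (\<lambda>_. borel))
                          \<and> space (Q y) = space (PiM {..<d} (\<lambda>_. borel :: real measure))"
    and Hf: "cond_density d f" and Hs: "smooth_order l C L \<zeta> f"
    and Hp1: "c \<le> p" and Hp2: "p \<le> 1 - c"
    and Hw: "\<forall>y\<in>{1, -1::real}. 0 < w y \<and> w y \<le> W"
    and Hae: "\<forall>y\<in>{1, -1::real}. AE z in Q y. \<forall>j<d. \<bar>z j\<bar> \<le> Mn"
    and HB: "\<forall>y\<in>{1, -1::real}. \<forall>j<d. (\<integral>z. (z j) ^ 4 \<partial>Q y) \<le> B"
  shows "(\<forall>j<d. \<bar>gradR d p w Q f \<beta>h j - gradR d p w Q f \<beta>s j\<bar>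
                \<le> (2 * W * C * max 1 ((B + 1) / 2)) * Mn * (\<Sum>i<d. \<bar>\<beta>h i - \<beta>s i\<bar>))
      \<and> (\<forall>j<d. \<forall>k<d. \<bar>hessR d p w Q f \<beta>h j k - hessR d p w Q f \<beta>s j k\<bar>
                \<le> (2 * W * C * max 1 ((B + 1) / 2)) * Mn * (\<Sum>i<d. \<bar>\<beta>h i - \<beta>s i\<bar>))"
proof -
  define K0 where "K0 = max 1 ((B + 1) / 2)"
  define F' where "F' y x z = deriv (\<lambda>x. f x y z) x" for y x z
  have Y: "y \<in> {1, -1} \<Longrightarrow> y = 1 \<or> y = -1" for y :: real by auto
  have M: "prob_space (Q y)" "sets (Q y) = sets (NN d)" if "y \<in> {1, -1}" for y
    using HQ that by auto
  have fm: "(\<lambda>(x, z). f x y z) \<in> borel_measurable (lborel \<Otimes>\<^sub>M NN d)" if "y \<in> {1, -1}" for y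
    using Hf that unfolding cond_density_def by auto
  have Fpos: "f x y z \<ge> 0" and Fint: "integrable lborel (\<lambda>x. f x y z)"
    and F1: "(\<integral>x. f x y z \<partial>lborel) = 1" if "y \<in> {1, -1}" for x y z
    using Hf that unfolding cond_density_def by auto
  have sm: "\<forall>z. (\<forall>i<l. \<forall>x. ((deriv ^^ i) (\<lambda>x. f x y z) has_real_derivative (deriv ^^ Suc i) (\<lambda>x. f x y z) x) (at x))
      \<and> (\<forall>i\<le>l. \<forall>x. \<bar>(deriv ^^ i) (\<lambda>x. f x y z) x\<bar> \<le> C)" if "y \<in> {1, -1}" for y
    using Hs that unfolding smooth_order_def by blast
  define F'' where "F'' y x z = (deriv ^^ 2) (\<lambda>x. f x y z) x" for y x z
  have dF: "((\<lambda>x. f x y z) has_real_derivative F' y x z) (at x)"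
    and dF1: "((\<lambda>x. F' y x z) has_real_derivative F'' y x z) (at x)"
    and bF: "\<bar>f x y z\<bar> \<le> C" and bF1: "\<bar>F' y x z\<bar> \<le> C" and bF2: "\<bar>F'' y x z\<bar> \<le> C"
    if "y \<in> {1, -1}" for x y z
  proof -
    have A: "\<forall>i<l. \<forall>x. ((deriv ^^ i) (\<lambda>x. f x y z) has_real_derivative (deriv ^^ Suc i) (\<lambda>x. f x y z) x) (at x)"
      and Bd: "\<forall>i\<le>l. \<forall>x. \<bar>(deriv ^^ i) (\<lambda>x. f x y z) x\<bar> \<le> C"
      using sm[OF that] by blast+
    have e: "(\<lambda>x. F' y x z) = deriv (\<lambda>x. f x y z)" unfolding F'_def by (rule ext) simp
    show "((\<lambda>x. f x y z) has_real_derivative F' y x z) (at x)"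
      using A[rule_format, of 0 x] l2 unfolding F'_def by simp
    show "((\<lambda>x. F' y x z) has_real_derivative F'' y x z) (at x)"
      using A[rule_format, of 1 x] l2 unfolding e F''_def by (simp add: numeral_2_eq_2)
    show "\<bar>f x y z\<bar> \<le> C" using Bd[rule_format, of 0 x] by simp
    show "\<bar>F' y x z\<bar> \<le> C" using Bd[rule_format, of 1 x] l2 unfolding F'_def by simp
    show "\<bar>F'' y x z\<bar> \<le> C" using Bd[rule_format, of 2 x] l2 unfolding F''_def by simp
  qed
  have lipF: "\<bar>f u y z - f v y z\<bar> \<le> C * \<bar>u - v\<bar>" if "y \<in> {1, -1}" for u v y z
    using lip_bound[of "\<lambda>x. f x y z" "\<lambda>x. F' y x z" C u v] dF[OF that] bF1[OF that] by blast
  have lipF1: "\<bar>F' y u z - F' y v z\<bar> \<le> C * \<bar>u - v\<bar>" if "y \<in> {1, -1}" for u v y z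
    using lip_bound[of "\<lambda>x. F' y x z" "\<lambda>x. F'' y x z" C u v] dF1[OF that] bF2[OF that] by blast
  have fm1: "(\<lambda>(x, z). F' y x z) \<in> borel_measurable (lborel \<Otimes>\<^sub>M NN d)" if "y \<in> {1, -1}" for y
    by (rule deriv_meas[OF fm[OF that] dF[OF that]])
  have Mn: "Mn \<ge> 0" if "0 < d"
  proof (rule ccontr)
    assume "\<not> Mn \<ge> 0"
    have "AE z in Q 1. \<forall>j<d. \<bar>z j\<bar> \<le> Mn" using Hae by simp
    then have "AE z in Q 1. False"
    proof eventually_elim
      case (elim z)
      then have "\<bar>z 0\<bar> \<le> Mn" using that by simp
      then show False using \<open>\<not> Mn \<ge> 0\<close> by linarith
    qed
    then show False using prob_space.AE_False[OF M(1)[of 1]] by auto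
  qed
  have ae: "AE z in Q y. \<forall>j<d. \<bar>z j\<bar> \<le> Mn" if "y \<in> {1, -1}" for y
    using Hae that by blast
  have B4: "\<forall>j<d. (\<integral>z. (z j) ^ 4 \<partial>Q y) \<le> B" if "y \<in> {1, -1}" for y
    using HB that by blast
  define R where "R y \<beta> = (\<integral>z. Phi y (\<lambda>x. f x y z) (dotp d \<beta> z) \<partial>Q y)" for y \<beta>
  define G where "G y \<beta> j = (\<integral>z. y * z j * f (dotp d \<beta> z) y z \<partial>Q y)" for y \<beta> j
  define H where "H y \<beta> j k = (\<integral>z. y * z j * z k * F' y (dotp d \<beta> z) z \<partial>Q y)" for y \<beta> j k
  have y1: "(1::real) \<in> {1, -1}" and y2: "(-1::real) \<in> {1, -1}" by auto
  have risk_eq: "risk d p w Q f \<beta> = p * w 1 * R 1 \<beta> + (1 - p) * w (-1) * R (-1) \<beta>" for \<beta>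
    unfolding risk_def R_def Phi_def dotp_def by simp
  have GD: "((\<lambda>t. R y (\<beta>(j := \<beta> j + t))) has_real_derivative G y \<beta> j) (at 0)"
    if y: "y \<in> {1, -1}" and j: "j < d" for y \<beta> j
    unfolding R_def G_def
    by (rule grad_deriv[where F="\<lambda>x z. f x y z", OF M[OF y] fm[OF y] Fpos[OF y] Fint[OF y] F1[OF y]
          lipF[OF y] bF[OF y] ae[OF y] y j])
  have gr: "gradR d p w Q f \<beta> j = p * w 1 * G 1 \<beta> j + (1 - p) * w (-1) * G (-1) \<beta> j"
    if j: "j < d" for \<beta> j
  proof -
    have "((\<lambda>t. risk d p w Q f (\<beta>(j := \<beta> j + t))) has_real_derivative
        p * w 1 * G 1 \<beta> j + (1 - p) * w (-1) * G (-1) \<beta> j) (at 0)"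
      unfolding risk_eq by (intro DERIV_add DERIV_cmult GD y1 y2 j)
    then show ?thesis unfolding gradR_def by (rule DERIV_imp_deriv)
  qed
  have HD: "((\<lambda>t. G y (\<beta>(k := \<beta> k + t)) j) has_real_derivative H y \<beta> j k) (at 0)"
    if y: "y \<in> {1, -1}" and j: "j < d" and k: "k < d" for y \<beta> j k
    unfolding G_def H_def
    by (rule hess_deriv[where F="\<lambda>x z. f x y z" and F'="\<lambda>x z. F' y x z", OF M[OF y] fm[OF y] fm1[OF y]
          dF[OF y] lipF1[OF y] bF[OF y] bF1[OF y] ae[OF y] y j k])
  have hs: "hessR d p w Q f \<beta> j k = p * w 1 * H 1 \<beta> j k + (1 - p) * w (-1) * H (-1) \<beta> j k"
    if j: "j < d" and k: "k < d" for \<beta> j k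
  proof -
    have "((\<lambda>t. gradR d p w Q f (\<beta>(k := \<beta> k + t)) j) has_real_derivative
        p * w 1 * H 1 \<beta> j k + (1 - p) * w (-1) * H (-1) \<beta> j k) (at 0)"
      unfolding gr[OF j] by (intro DERIV_add DERIV_cmult HD y1 y2 j k)
    then show ?thesis unfolding hessR_def by (rule DERIV_imp_deriv)
  qed
  have p01: "0 \<le> p" "p \<le> 1" using Hp1 Hp2 c0 by auto
  have w01: "0 \<le> w 1" "w 1 \<le> W" "0 \<le> w (-1)" "w (-1) \<le> W" using Hw by auto
  define T where "T = C * (\<Sum>i<d. \<bar>\<beta>h i - \<beta>s i\<bar>) * (Mn * K0)"
  have KT: "(2 * W * C * max 1 ((B + 1) / 2)) * Mn * (\<Sum>i<d. \<bar>\<beta>h i - \<beta>s i\<bar>) = 2 * W * T"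
    unfolding T_def K0_def by (simp add: algebra_simps)
  show ?thesis unfolding KT
  proof (intro conjI allI impI)
    fix j assume j: "j < d"
    then have Mn0: "Mn \<ge> 0" using Mn by simp
    have X: "\<bar>G y \<beta>h j - G y \<beta>s j\<bar> \<le> T" if y: "y \<in> {1, -1}" for y
      unfolding G_def T_def K0_def
      by (rule grad_diff[where F="\<lambda>x z. f x y z", OF M[OF y] fm[OF y] lipF[OF y] bF[OF y] ae[OF y] B4[OF y] y j Mn0])
    have "gradR d p w Q f \<beta>h j - gradR d p w Q f \<beta>s j
        = p * w 1 * (G 1 \<beta>h j - G 1 \<beta>s j) + (1 - p) * w (-1) * (G (-1) \<beta>h j - G (-1) \<beta>s j)"
      unfolding gr[OF j] by (simp add: algebra_simps)
    then show "\<bar>gradR d p w Q f \<beta>h j - gradR d p w Q f \<beta>s j\<bar> \<le> 2 * W * T"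
      using comb[OF p01 w01 X[OF y1] X[OF y2]] by simp
  next
    fix j k assume j: "j < d" and k: "k < d"
    then have Mn0: "Mn \<ge> 0" using Mn by simp
    have X: "\<bar>H y \<beta>h j k - H y \<beta>s j k\<bar> \<le> T" if y: "y \<in> {1, -1}" for y
      unfolding H_def T_def K0_def
      by (rule hess_diff[where F'="\<lambda>x z. F' y x z", OF M[OF y] fm1[OF y] lipF1[OF y] bF1[OF y] ae[OF y] B4[OF y] y j k Mn0])
    have "hessR d p w Q f \<beta>h j k - hessR d p w Q f \<beta>s j k
        = p * w 1 * (H 1 \<beta>h j k - H 1 \<beta>s j k) + (1 - p) * w (-1) * (H (-1) \<beta>h j k - H (-1) \<beta>s j k)"
      unfolding hs[OF j k] by (simp add: algebra_simps)
    then show "\<bar>hessR d p w Q f \<beta>h j k - hessR d p w Q f \<beta>s j k\<bar> \<le> 2 * W * T"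
      using comb[OF p01 w01 X[OF y1] X[OF y2]] by simp
  qed
qed


theorem lemma6:
  fixes C L \<zeta> c W B C4 :: real and l :: nat and Ker :: "real \<Rightarrow> real"
  assumes "l \<ge> 2" and "C > 0" and "L > 0" and "0 < \<zeta>" and "\<zeta> \<le> 1"
    and "0 < c" and "W > 0" and "B > 0" and "C4 > 0"
    and "kernel_ok l Ker"
  shows "\<exists>K. \<forall>(d::nat) (n::nat) (\<delta>::real) (Mn::real) (p::real) (w::real \<Rightarrow> real)
           (Q::real \<Rightarrow> (nat \<Rightarrow> real) measure) (f::real \<Rightarrow> real \<Rightarrow> (nat \<Rightarrow> real) \<Rightarrow> real)
           (\<beta>s::nat \<Rightarrow> real) (\<beta>h::nat \<Rightarrow> real).
      \<comment> \<open>the joint law of (X,Y,Z)\<close>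
      (\<forall>y\<in>{1, -1::real}. prob_space (Q y) \<and> sets (Q y) = sets (PiM {..<d} (\<lambda>_. borel))
                          \<and> space (Q y) = space (PiM {..<d} (\<lambda>_. borel :: real measure)))
      \<and> cond_density d f
      \<comment> \<open>(A1)\<close>
      \<and> smooth_order l C L \<zeta> f
      \<comment> \<open>(A3)\<close>
      \<and> c \<le> p \<and> p \<le> 1 - c
      \<and> (\<forall>y\<in>{1, -1::real}. 0 < w y \<and> w y \<le> W)
      \<comment> \<open>(A4)\<close>
      \<and> n > 0 \<and> \<delta> > 0
      \<and> (\<forall>y\<in>{1, -1::real}. AE z in Q y. \<forall>j<d. \<bar>z j\<bar> \<le> Mn)
      \<and> Mn\<^sup>2 \<le> C4 * sqrt (real n * \<delta> / ln (real d))
      \<and> (\<forall>y\<in>{1, -1::real}. \<forall>j<d. (\<integral>z. (z j) ^ 4 \<partial>Q y) \<le> B)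
      \<comment> \<open>beta* is the unique minimizer of R\<close>
      \<and> (\<forall>\<beta>. risk d p w Q f \<beta>s \<le> risk d p w Q f \<beta>)
      \<and> (\<forall>\<beta>. (\<forall>\<beta>'. risk d p w Q f \<beta> \<le> risk d p w Q f \<beta>') \<longrightarrow> (\<forall>j<d. \<beta> j = \<beta>s j))
      \<longrightarrow>
      (\<forall>j<d. \<bar>gradR d p w Q f \<beta>h j - gradR d p w Q f \<beta>s j\<bar>
                \<le> K * Mn * (\<Sum>i<d. \<bar>\<beta>h i - \<beta>s i\<bar>))
      \<and> (\<forall>j<d. \<forall>k<d. \<bar>hessR d p w Q f \<beta>h j k - hessR d p w Q f \<beta>s j k\<bar>
                \<le> K * Mn * (\<Sum>i<d. \<bar>\<beta>h i - \<beta>s i\<bar>))"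
    apply (rule exI[where x="2 * W * C * max 1 ((B + 1) / 2)"])
  apply (intro allI impI)
  apply (elim conjE)
  apply (rule main[OF assms(1) assms(6)])
         apply assumption+
  done

end
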